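(* Let $\mathcal{A}$ be a finite alphabet and let $\Theta:\mathcal{A}^*\to\mathcal{A}^*$ be an involutive antimorphism. Let $\mathbf{u}\in\mathcal{A}^{\mathbb{N}}$ be a uniformly recurrent infinite word such that $D_{\Theta}(\mathbf{u})<+\infty$. Then there exist a finite alphabet $\mathcal{B}$, a morphism $\varphi:\mathcal{B}^*\to\mathcal{A}^*$ and a uniformly recurrent infinite word $\mathbf{v}\in\mathcal{B}^{\mathbb{N}}$ such that $\mathbf{u}=\varphi(\mathbf{v})$ and $\mathbf{v}$ is $\Theta_0$-rich, where $\Theta_0$ denotes the reversal mapping on $\mathcal{B}^*$.
   Context: An involutive antimorphism on $\mathcal{A}^*$ is a map $\Theta:\mathcal{A}^*\to\mathcal{A}^*$ with $\Theta^2=\mathrm{Id}$ and $\Theta(uv)=\Theta(v)\Theta(u)$ for all $u,v$. The reversal mapping $\Theta_0$ sends $w_1w_2\cdots w_n$ to $w_nw_{n-1}\cdots w_1$. A word $w$ is a $\Theta$-palindrome if $\Theta(w)=w$ (the empty word is one). For a finite word $w$, $\mathrm{Pal}_\Theta(w)$ is the set of distinct $\Theta$-palindromes occurring as factors of $w$ (including the empty word), and $G_\Theta(w)$ is the number of sets $\{a,\Theta(a)\}$ where $a$ is a letter occurring in $w$ with $a\neq\Theta(a)$. The $\Theta$-palindromic defect of a finite word $w$ is $D_\Theta(w)=|w|+1-G_\Theta(w)-\#\mathrm{Pal}_\Theta(w)$, and for an infinite word $\mathbf{u}$, $D_\Theta(\mathbf{u})=\sup\{D_\Theta(w): w \text{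 a factor of } \mathbf{u}\}$. A finite word $w$ is $\Theta$-rich if $D_\Theta(w)=0$; an infinite word is $\Theta$-rich if all its factors are $\Theta$-rich (for $\Theta_0$ this is the usual notion of a rich word: each factor $w$ contains $|w|+1$ distinct palindromes). An infinite word is recurrent if every factor occurs infinitely often; it is uniformly recurrent if it is recurrent and every factor $w$ has only finitely many return words, i.e. finitely many factors $q$ such that $qw$ has $w$ as prefix and suffix and contains exactly two occurrences of $w$. *)

theory Defs
  imports Main "HOL-Library.Sublist"
begin

definition invol_antimorphism :: "('a list \<Rightarrow> 'a list) \<Rightarrow> bool" where
  "invol_antimorphism \<Theta> \<longleftrightarrow> (\<forall>w. \<Theta> (\<Theta> w) = w) \<and> (\<forall>x y. \<Theta> (x @ y) = \<Theta> y @ \<Theta> x)"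

definition inf_factor_at :: "(nat \<Rightarrow> 'a) \<Rightarrow> nat \<Rightarrow> nat \<Rightarrow> 'a list" where
  "inf_factor_at u i n = map u [i..<i+n]"

definition is_inf_factor :: "(nat \<Rightarrow> 'a) \<Rightarrow> 'a list \<Rightarrow> bool" where
  "is_inf_factor u w \<longleftrightarrow> (\<exists>i. inf_factor_at u i (length w) = w)"

definition Pal :: "('a list \<Rightarrow> 'a list) \<Rightarrow> 'a list \<Rightarrow> 'a list set" where
  "Pal \<Theta> w = {p. sublist p w \<and> \<Theta> p = p}"

definition G :: "('a list \<Rightarrow> 'a list) \<Rightarrow> 'a list \<Rightarrow> nat" where
  "G \<Theta> w = card {{[a], \<Theta> [a]} | a. a \<in> set w \<and> \<Theta> [a] \<noteq> [a]}"

definition defect :: "('a list \<Rightarrow> 'a list) \<Rightarrow> 'a list \<Rightarrow> int" where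
  "defect \<Theta> w = int (length w) + 1 - int (G \<Theta> w) - int (card (Pal \<Theta> w))"

definition finite_defect :: "('a list \<Rightarrow> 'a list) \<Rightarrow> (nat \<Rightarrow> 'a) \<Rightarrow> bool" where
  "finite_defect \<Theta> u \<longleftrightarrow> (\<exists>K::int. \<forall>w. is_inf_factor u w \<longrightarrow> defect \<Theta> w \<le> K)"

definition rich :: "(nat \<Rightarrow> 'a) \<Rightarrow> bool" where
  "rich v \<longleftrightarrow> (\<forall>w. is_inf_factor v w \<longrightarrow> defect rev w = 0)"

definition recurrent :: "(nat \<Rightarrow> 'a) \<Rightarrow> bool" where
  "recurrent u \<longleftrightarrow> (\<forall>w. is_inf_factor u w \<longrightarrow> infinite {i. inf_factor_at u i (length w) = w})"

definition occ_count :: "'a list \<Rightarrow> 'a list \<Rightarrow> nat" where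
  "occ_count w x = card {i. i + length w \<le> length x \<and> take (length w) (drop i x) = w}"

definition return_words :: "(nat \<Rightarrow> 'a) \<Rightarrow> 'a list \<Rightarrow> 'a list set" where
  "return_words u w = {q. is_inf_factor u (q @ w) \<and> prefix w (q @ w) \<and> suffix w (q @ w)
                          \<and> occ_count w (q @ w) = 2}"

definition uniformly_recurrent :: "(nat \<Rightarrow> 'a) \<Rightarrow> bool" where
  "uniformly_recurrent u \<longleftrightarrow> recurrent u \<and>
     (\<forall>w. is_inf_factor u w \<longrightarrow> finite (return_words u w))"

(* u = phi(v) for the morphism with letter images phi: u is the infinite concatenation
   phi(v 0) phi(v 1) phi(v 2) ... *)
definition morph_prefix :: "('b \<Rightarrow> 'a list) \<Rightarrow> (nat \<Rightarrow> 'b) \<Rightarrow> nat \<Rightarrow> 'a list" where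
  "morph_prefix \<phi> v n = concat (map (\<phi> \<circ> v) [0..<n])"

definition is_morph_image :: "('b \<Rightarrow> 'a list) \<Rightarrow> (nat \<Rightarrow> 'b) \<Rightarrow> (nat \<Rightarrow> 'a) \<Rightarrow> bool" where
  "is_morph_image \<phi> v u \<longleftrightarrow>
     (\<forall>n. inf_factor_at u 0 (length (morph_prefix \<phi> v n)) = morph_prefix \<phi> v n) \<and>
     (\<forall>N. \<exists>n. length (morph_prefix \<phi> v n) \<ge> N)"

end

theory Submission
  imports Defs "HOL-Library.Infinite_Set" "HOL-Library.Countable"
begin

definition TH :: "('a \<Rightarrow> 'a) \<Rightarrow> 'a list \<Rightarrow> 'a list" where
  "TH \<theta> w = rev (map \<theta> w)"

lemma theta_exists:
  assumes "invol_antimorphism \<Theta>"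
  shows "\<exists>\<theta>. (\<forall>a. \<theta> (\<theta> a) = a) \<and> \<Theta> = TH \<theta>"
proof -
  have inv: "\<And>w. \<Theta> (\<Theta> w) = w" and app: "\<And>x y. \<Theta> (x @ y) = \<Theta> y @ \<Theta> x"
    using assms unfolding invol_antimorphism_def by auto
  have nil: "\<Theta> [] = []"
  proof -
    have "\<Theta> [] = \<Theta> [] @ \<Theta> []" using app[of "[]" "[]"] by simp
    hence "length (\<Theta> []) = length (\<Theta> []) + length (\<Theta> [])" by (metis length_append)
    thus ?thesis by simp
  qed
  have ne: "\<Theta> [a] \<noteq> []" for a
    using inv[of "[a]"] nil by auto
  have ge: "length w \<le> length (\<Theta> w)" for w
  proof (induction w)
    case Nil then show ?case by simp
  next
    case (Cons a w)
    have "\<Theta> (a # w) = \<Theta> w @ \<Theta> [a]" using app[of "[a]" w] by simp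
    moreover have "length (\<Theta> [a]) \<ge> 1" using ne[of a] by (cases "\<Theta> [a]") auto
    ultimately show ?case using Cons by simp
  qed
  have one: "length (\<Theta> [a]) = 1" for a
  proof -
    have "length (\<Theta> [a]) \<le> length (\<Theta> (\<Theta> [a]))" by (rule ge)
    hence "length (\<Theta> [a]) \<le> 1" using inv[of "[a]"] by simp
    thus ?thesis using ne[of a] by (cases "\<Theta> [a]") auto
  qed
  define \<theta> where "\<theta> a = hd (\<Theta> [a])" for a
  have sing: "\<Theta> [a] = [\<theta> a]" for a
    using one[of a] unfolding \<theta>_def by (cases "\<Theta> [a]") auto
  have eq: "\<Theta> w = TH \<theta> w" for w
  proof (induction w)
    case Nil then show ?case by (simp add: nil TH_def)
  next
    case (Cons a w)
    have "\<Theta> (a # w) = \<Theta> w @ \<Theta> [a]" using app[of "[a]" w] by simp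
    then show ?case using Cons sing by (simp add: TH_def)
  qed
  have "\<theta> (\<theta> a) = a" for a
    using inv[of "[a]"] by (simp add: sing)
  thus ?thesis using eq by blast
qed

locale invo =
  fixes \<theta> :: "'a \<Rightarrow> 'a"
  assumes inv[simp]: "\<theta> (\<theta> a) = a"
begin

abbreviation "\<Theta> \<equiv> TH \<theta>"

lemma TH_app[simp]: "\<Theta> (x @ y) = \<Theta> y @ \<Theta> x" by (simp add: TH_def)
lemma TH_TH[simp]: "\<Theta> (\<Theta> x) = x" by (simp add: TH_def rev_map comp_def)
lemma TH_len[simp]: "length (\<Theta> x) = length x" by (simp add: TH_def)
lemma TH_sing[simp]: "\<Theta> [a] = [\<theta> a]" by (simp add: TH_def)
lemma TH_Nil[simp]: "\<Theta> [] = []" by (simp add: TH_def)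
lemma TH_Cons: "\<Theta> (a # x) = \<Theta> x @ [\<theta> a]" by (simp add: TH_def)
lemma TH_set[simp]: "set (\<Theta> x) = \<theta> ` set x" by (simp add: TH_def)
lemma TH_inj: "\<Theta> x = \<Theta> y \<longleftrightarrow> x = y" by (metis TH_TH)

lemma sublist_TH: "sublist x y \<Longrightarrow> sublist (\<Theta> x) (\<Theta> y)"
  unfolding TH_def by (simp add: map_mono_sublist)

lemma sublist_TH_iff: "sublist (\<Theta> x) (\<Theta> y) \<longleftrightarrow> sublist x y"
  by (metis TH_TH sublist_TH)

lemma Pal_TH: "Pal \<Theta> (\<Theta> w) = Pal \<Theta> w"
proof -
  have "sublist p (\<Theta> w) \<longleftrightarrow> sublist p w" if "\<Theta> p = p" for p
    by (metis sublist_TH_iff that)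
  thus ?thesis unfolding Pal_def by auto
qed

definition Gset :: "'a list \<Rightarrow> 'a list set set" where
  "Gset w = (\<lambda>a. {[a], [\<theta> a]}) ` {a \<in> set w. \<theta> a \<noteq> a}"

lemma G_eq: "G \<Theta> w = card (Gset w)"
proof -
  have "{{[a], \<Theta> [a]} | a. a \<in> set w \<and> \<Theta> [a] \<noteq> [a]} = Gset w"
    unfolding Gset_def by auto
  thus ?thesis unfolding G_def by simp
qed

lemma Gset_TH: "Gset (\<Theta> w) = Gset w"
proof -
  have "(\<lambda>a. {[a], [\<theta> a]}) ` {a \<in> \<theta> ` set w. \<theta> a \<noteq> a} \<subseteq> (\<lambda>a. {[a], [\<theta> a]}) ` {a \<in> set w. \<theta> a \<noteq> a}"
  proof
    fix X assume "X \<in> (\<lambda>a. {[a], [\<theta> a]}) ` {a \<in> \<theta> ` set w. \<theta> a \<noteq> a}"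
    then obtain b where b: "b \<in> set w" "\<theta> (\<theta> b) \<noteq> \<theta> b" "X = {[\<theta> b], [\<theta> (\<theta> b)]}" by auto
    hence "X = {[b], [\<theta> b]}" "\<theta> b \<noteq> b" by auto
    thus "X \<in> (\<lambda>a. {[a], [\<theta> a]}) ` {a \<in> set w. \<theta> a \<noteq> a}" using b by auto
  qed
  moreover have "(\<lambda>a. {[a], [\<theta> a]}) ` {a \<in> set w. \<theta> a \<noteq> a} \<subseteq> (\<lambda>a. {[a], [\<theta> a]}) ` {a \<in> \<theta> ` set w. \<theta> a \<noteq> a}"
  proof
    fix X assume "X \<in> (\<lambda>a. {[a], [\<theta> a]}) ` {a \<in> set w. \<theta> a \<noteq> a}"
    then obtain b where b: "b \<in> set w" "\<theta> b \<noteq> b" "X = {[b], [\<theta> b]}" by auto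
    hence "X = {[\<theta> b], [\<theta> (\<theta> b)]}" "\<theta> (\<theta> b) \<noteq> \<theta> b" "\<theta> b \<in> \<theta> ` set w" by auto
    thus "X \<in> (\<lambda>a. {[a], [\<theta> a]}) ` {a \<in> \<theta> ` set w. \<theta> a \<noteq> a}" by blast
  qed
  ultimately show ?thesis unfolding Gset_def by simp
qed

lemma Pal_finite: "finite (Pal \<Theta> w)"
proof -
  have "Pal \<Theta> w \<subseteq> set (sublists w)" unfolding Pal_def by auto
  thus ?thesis using finite_subset by blast
qed

lemma Pal_mono: "sublist x y \<Longrightarrow> Pal \<Theta> x \<subseteq> Pal \<Theta> y"
  unfolding Pal_def using sublist_order.order_trans by blast

lemma defect_TH: "defect \<Theta> (\<Theta> w) = defect \<Theta> w"
  unfolding defect_def by (simp add: G_eq Gset_TH Pal_TH)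

lemma Gset_snoc: "Gset (w @ [a]) = Gset w \<union> (if \<theta> a \<noteq> a then {{[a], [\<theta> a]}} else {})"
  unfolding Gset_def by auto

lemma Gset_finite: "finite (Gset w)" unfolding Gset_def by simp

lemma new_pal_suffix:
  assumes "q \<in> Pal \<Theta> (w @ [a])" "q \<notin> Pal \<Theta> w"
  shows "suffix q (w @ [a])" "\<Theta> q = q"
  using assms unfolding Pal_def by (auto simp: sublist_snoc)

lemma suffix_pal_prefix:
  assumes "suffix q p" "\<Theta> q = q" "\<Theta> p = p"
  shows "prefix q p"
proof -
  obtain s where "p = s @ q" using assms(1) by (auto simp: suffix_def)
  hence "p = q @ \<Theta> s" using assms by (metis TH_app)
  thus ?thesis by simp
qed

lemma new_pal_unique:
  assumes "q1 \<in> Pal \<Theta> (w @ [a])" "q1 \<notin> Pal \<Theta> w"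
    and "q2 \<in> Pal \<Theta> (w @ [a])" "q2 \<notin> Pal \<Theta> w"
  shows "q1 = q2"
proof -
  have s1: "suffix q1 (w @ [a])" "\<Theta> q1 = q1" and s2: "suffix q2 (w @ [a])" "\<Theta> q2 = q2"
    using new_pal_suffix assms by blast+
  have main: "x = y" if x: "suffix x (w @ [a])" "\<Theta> x = x" "x \<notin> Pal \<Theta> w"
     and y: "suffix y (w @ [a])" "\<Theta> y = y" and le: "length x \<le> length y" for x y
  proof (rule ccontr)
    assume ne: "x \<noteq> y"
    have "suffix x y" using x(1) y(1) le suffix_length_suffix by blast
    hence "prefix x y" using suffix_pal_prefix x y by blast
    then obtain t where yt: "y = x @ t" by (auto simp: prefix_def)
    have "t \<noteq> []" using ne yt by auto
    obtain p where "w @ [a] = p @ y" using y(1) by (auto simp: suffix_def)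
    hence "w @ [a] = p @ x @ t" using yt by simp
    hence "w = p @ x @ butlast t" using \<open>t \<noteq> []\<close>
      by (metis append_assoc butlast_append butlast_snoc)
    hence "sublist x w" by auto
    thus False using x unfolding Pal_def by auto
  qed
  show ?thesis
  proof (cases "length q1 \<le> length q2")
    case True then show ?thesis using main s1 s2 assms by blast
  next
    case False then show ?thesis using main[of q2 q1] s1 s2 assms by auto
  qed
qed

lemma Pal_snoc_sub: "Pal \<Theta> w \<subseteq> Pal \<Theta> (w @ [a])"
  by (rule Pal_mono) auto

lemma card_Pal_snoc: "card (Pal \<Theta> (w @ [a])) \<le> card (Pal \<Theta> w) + 1"
proof (cases "Pal \<Theta> (w @ [a]) \<subseteq> Pal \<Theta> w")
  case True
  then show ?thesis using card_mono[OF Pal_finite True] by simp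
next
  case False
  then obtain q where q: "q \<in> Pal \<Theta> (w @ [a])" "q \<notin> Pal \<Theta> w" by auto
  have "Pal \<Theta> (w @ [a]) \<subseteq> insert q (Pal \<Theta> w)"
    using new_pal_unique[OF q] by auto
  hence "card (Pal \<Theta> (w @ [a])) \<le> card (insert q (Pal \<Theta> w))"
    by (rule card_mono[rotated]) (simp add: Pal_finite)
  also have "\<dots> \<le> card (Pal \<Theta> w) + 1" by (simp add: Pal_finite card_insert_le_m1)
  finally show ?thesis .
qed

lemma card_Pal_snoc_new:
  assumes "q \<in> Pal \<Theta> (w @ [a])" "q \<notin> Pal \<Theta> w"
  shows "card (Pal \<Theta> (w @ [a])) = card (Pal \<Theta> w) + 1"
proof -
  have "insert q (Pal \<Theta> w) \<subseteq> Pal \<Theta> (w @ [a])" using assms Pal_snoc_sub by auto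
  hence "card (insert q (Pal \<Theta> w)) \<le> card (Pal \<Theta> (w @ [a]))"
    by (rule card_mono[rotated]) (simp add: Pal_finite)
  hence "card (Pal \<Theta> w) + 1 \<le> card (Pal \<Theta> (w @ [a]))"
    using assms by (simp add: Pal_finite)
  thus ?thesis using card_Pal_snoc[of w a] by simp
qed

lemma G_increase_no_new:
  assumes "card (Gset (w @ [a])) \<noteq> card (Gset w)"
  shows "Pal \<Theta> (w @ [a]) = Pal \<Theta> w"
proof (rule ccontr)
  assume "Pal \<Theta> (w @ [a]) \<noteq> Pal \<Theta> w"
  then obtain q where q: "q \<in> Pal \<Theta> (w @ [a])" "q \<notin> Pal \<Theta> w" using Pal_snoc_sub by blast
  have tana: "\<theta> a \<noteq> a \<and> {[a], [\<theta> a]} \<notin> Gset w"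
  proof (rule ccontr)
    assume "\<not> (\<theta> a \<noteq> a \<and> {[a], [\<theta> a]} \<notin> Gset w)"
    hence "Gset (w @ [a]) = Gset w" by (auto simp: Gset_snoc)
    thus False using assms by simp
  qed
  hence ta: "\<theta> a \<noteq> a" and nin: "{[a], [\<theta> a]} \<notin> Gset w" by auto
  have suf: "suffix q (w @ [a])" and pq: "\<Theta> q = q" using new_pal_suffix[OF q] by auto
  have "q \<noteq> []" using q unfolding Pal_def by auto
  then obtain b q' where bq: "q = b # q'" by (cases q) auto
  show False
  proof (cases "q' = []")
    case True
    hence "q = [a]" using suf bq by (auto simp: suffix_def)
    thus False using pq ta by simp
  next
    case False
    have la: "last q = a"
    proof -
      obtain zs where "w @ [a] = zs @ q" using suf by (auto simp: suffix_def)
      hence "last (w @ [a]) = last (zs @ q)" by simp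
      thus ?thesis using \<open>q \<noteq> []\<close> by simp
    qed
    have "\<Theta> q = \<Theta> q' @ [\<theta> b]" using bq by (simp add: TH_Cons)
    hence tb: "\<theta> b = a" using pq la by (metis last_snoc)
    obtain p where "w @ [a] = p @ b # q'" using suf bq by (auto simp: suffix_def)
    hence "butlast (w @ [a]) = butlast (p @ b # q')" by simp
    hence "w = p @ b # butlast q'" using False by (simp add: butlast_append)
    hence bw: "b \<in> set w" by simp
    have "\<theta> b \<noteq> b" using tb ta by auto
    hence "{[b], [\<theta> b]} \<in> Gset w" using bw unfolding Gset_def by auto
    moreover have "{[b], [\<theta> b]} = {[a], [\<theta> a]}" using tb by auto
    ultimately show False using nin by simp
  qed
qed

lemma defect_snoc: "defect \<Theta> w \<le> defect \<Theta> (w @ [a])"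
proof -
  have g: "card (Gset (w @ [a])) \<le> card (Gset w) + 1"
    by (simp add: Gset_snoc Gset_finite card_insert_le_m1)
  have gg: "card (Gset w) \<le> card (Gset (w @ [a]))"
    by (rule card_mono) (auto simp: Gset_finite Gset_snoc)
  show ?thesis
  proof (cases "card (Gset (w @ [a])) = card (Gset w)")
    case True
    then show ?thesis using card_Pal_snoc[of w a] unfolding defect_def G_eq by simp
  next
    case False
    then show ?thesis using G_increase_no_new[OF False] g unfolding defect_def G_eq by simp
  qed
qed

lemma defect_Cons: "defect \<Theta> w \<le> defect \<Theta> (a # w)"
proof -
  have "defect \<Theta> w = defect \<Theta> (\<Theta> w)" by (simp add: defect_TH)
  also have "\<dots> \<le> defect \<Theta> (\<Theta> w @ [\<theta> a])" by (rule defect_snoc)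
  also have "\<Theta> w @ [\<theta> a] = \<Theta> (a # w)" by (simp add: TH_Cons)
  also have "defect \<Theta> \<dots> = defect \<Theta> (a # w)" by (simp add: defect_TH)
  finally show ?thesis .
qed

lemma defect_append_right: "defect \<Theta> w \<le> defect \<Theta> (w @ s)"
proof (induction s rule: rev_induct)
  case Nil then show ?case by simp
next
  case (snoc x s) then show ?case using defect_snoc[of "w @ s" x] by simp
qed

lemma defect_append_left: "defect \<Theta> w \<le> defect \<Theta> (p @ w)"
proof (induction p)
  case Nil then show ?case by simp
next
  case (Cons x p) then show ?case using defect_Cons[of "p @ w" x] by simp
qed

lemma defect_mono: "sublist x y \<Longrightarrow> defect \<Theta> x \<le> defect \<Theta> y"
  unfolding sublist_def using defect_append_left defect_append_right order_trans
  by (metis append_assoc)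

lemma defect_eq_new_pal:
  assumes "defect \<Theta> (w @ [a]) = defect \<Theta> w" "a \<in> set w"
  shows "\<exists>q. q \<in> Pal \<Theta> (w @ [a]) \<and> q \<notin> Pal \<Theta> w"
proof -
  have "set (w @ [a]) = set w" using assms(2) by auto
  hence "Gset (w @ [a]) = Gset w" unfolding Gset_def by simp
  hence "card (Pal \<Theta> (w @ [a])) = card (Pal \<Theta> w) + 1"
    using assms(1) unfolding defect_def G_eq by simp
  hence "card (Pal \<Theta> w) < card (Pal \<Theta> (w @ [a]))" by simp
  thus ?thesis using Pal_snoc_sub[of w a] by (metis card_mono Pal_finite not_le subsetI subset_antisym)
qed

end



definition occ :: "(nat \<Rightarrow> 'a) \<Rightarrow> 'a list \<Rightarrow> nat \<Rightarrow> bool" where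
  "occ u F i \<longleftrightarrow> inf_factor_at u i (length F) = F"

lemma ifa_len[simp]: "length (inf_factor_at u i n) = n" by (simp add: inf_factor_at_def)
lemma ifa_nth[simp]: "k < n \<Longrightarrow> inf_factor_at u i n ! k = u (i + k)" by (simp add: inf_factor_at_def)
lemma ifa_0[simp]: "inf_factor_at u i 0 = []" by (simp add: inf_factor_at_def)
lemma ifa_add: "inf_factor_at u i (m + n) = inf_factor_at u i m @ inf_factor_at u (i + m) n"
  by (rule nth_equalityI) (auto simp: nth_append)
lemma ifa_Suc: "inf_factor_at u i (Suc n) = inf_factor_at u i n @ [u (i + n)]"
  using ifa_add[of u i n 1] by (simp add: inf_factor_at_def)
lemma ifa_Cons: "inf_factor_at u i (Suc n) = u i # inf_factor_at u (Suc i) n"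
  using ifa_add[of u i 1 n] by (simp add: inf_factor_at_def)
lemma ifa_take_drop: "k + m \<le> n \<Longrightarrow> take m (drop k (inf_factor_at u i n)) = inf_factor_at u (i + k) m"
  by (rule nth_equalityI) (auto simp: add.assoc)
lemma ifa_take: "m \<le> n \<Longrightarrow> take m (inf_factor_at u i n) = inf_factor_at u i m"
  using ifa_take_drop[of 0 m n u i] by simp
lemma ifa_sublist: "i \<le> j \<Longrightarrow> j + m \<le> i + n \<Longrightarrow> sublist (inf_factor_at u j m) (inf_factor_at u i n)"
proof -
  assume a: "i \<le> j" "j + m \<le> i + n"
  have "inf_factor_at u j m = take m (drop (j - i) (inf_factor_at u i n))"
    using ifa_take_drop[of "j - i" m n u i] a by simp
  thus ?thesis by (metis sublist_order.order.trans sublist_take sublist_drop)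
qed
lemma occ_iff: "occ u F j \<longleftrightarrow> (\<forall>k<length F. u (j + k) = F ! k)"
  unfolding occ_def by (auto simp: list_eq_iff_nth_eq)

lemma factor_sublist:
  assumes "is_inf_factor u z" "sublist y z" shows "is_inf_factor u y"
proof -
  obtain p s where z: "z = p @ y @ s" using assms(2) by (auto simp: sublist_def)
  obtain i where i: "inf_factor_at u i (length z) = z" using assms(1) unfolding is_inf_factor_def by blast
  have "y = take (length y) (drop (length p) z)" using z by simp
  also have "\<dots> = inf_factor_at u (i + length p) (length y)"
    using ifa_take_drop[of "length p" "length y" "length z" u i] z i by simp
  finally show ?thesis unfolding is_inf_factor_def by metis
qed

lemma factor_ifa[simp]: "is_inf_factor u (inf_factor_at u i n)"
  unfolding is_inf_factor_def by (metis ifa_len)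

lemma factor_occ: "is_inf_factor u F \<longleftrightarrow> (\<exists>i. occ u F i)"
  by (simp add: is_inf_factor_def occ_def)

definition synd :: "(nat \<Rightarrow> 'a) \<Rightarrow> 'a list \<Rightarrow> bool" where
  "synd u F \<longleftrightarrow> (\<exists>R. \<forall>i. \<exists>j. i \<le> j \<and> j \<le> i + R \<and> occ u F j)"

lemma UR_synd:
  assumes UR: "uniformly_recurrent u" and fac: "is_inf_factor u F"
  shows "synd u F"
proof -
  define S where "S = {i. occ u F i}"
  have infS: "infinite S" using UR fac unfolding uniformly_recurrent_def recurrent_def S_def occ_def by auto
  have finRW: "finite (return_words u F)" using UR fac unfolding uniformly_recurrent_def by auto
  define nxt where "nxt j = (LEAST j'. j < j' \<and> j' \<in> S)" for j
  have ex: "\<exists>j'. j < j' \<and> j' \<in> S" for j using infS by (simp add: infinite_nat_iff_unbounded)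
  have nxt1: "j < nxt j \<and> nxt j \<in> S" for j unfolding nxt_def using LeastI_ex[OF ex[of j]] .
  have nxt2: "\<And>k. j < k \<Longrightarrow> k < nxt j \<Longrightarrow> k \<notin> S" for j
    unfolding nxt_def using not_less_Least by blast
  define M where "M = Max (length ` return_words u F)"
  have gap: "nxt j \<le> j + M" if jS: "j \<in> S" for j
  proof -
    define d where "d = nxt j - j"
    have d0: "0 < d" using nxt1[of j] d_def by simp
    have jd: "j + d = nxt j" using nxt1[of j] d_def by simp
    define q where "q = inf_factor_at u j d"
    have oc: "occ u F (j + d)" using nxt1[of j] jd S_def by simp
    have qF: "q @ F = inf_factor_at u j (d + length F)"
      using oc unfolding q_def occ_def by (simp add: ifa_add)
    have ocj: "occ u F j" using jS S_def by simp
    have "prefix F (q @ F)"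
    proof -
      have "take (length F) (q @ F) = F" using ocj qF unfolding occ_def by (simp add: ifa_take)
      thus ?thesis by (metis take_is_prefix)
    qed
    moreover have "suffix F (q @ F)" by (simp add: suffix_def)
    moreover have "occ_count F (q @ F) = 2"
    proof -
      have "{i. i + length F \<le> length (q @ F) \<and> take (length F) (drop i (q @ F)) = F} = {0, d}"
      proof (rule set_eqI, rule iffI)
        fix k assume "k \<in> {i. i + length F \<le> length (q @ F) \<and> take (length F) (drop i (q @ F)) = F}"
        hence k: "k \<le> d" "take (length F) (drop k (q @ F)) = F" by (auto simp: q_def)
        hence "occ u F (j + k)" unfolding qF occ_def using ifa_take_drop[of k "length F" "d + length F" u j] by simp
        hence "j + k \<in> S" by (simp add: S_def)
        thus "k \<in> {0, d}" using nxt2[of j "j + k"] k(1) jd by (cases "k = 0"; cases "k = d") auto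
      next
        fix k assume "k \<in> {0, d}"
        hence "k \<le> d" "occ u F (j + k)" using oc ocj by auto
        thus "k \<in> {i. i + length F \<le> length (q @ F) \<and> take (length F) (drop i (q @ F)) = F}"
          unfolding qF occ_def using ifa_take_drop[of k "length F" "d + length F" u j] by simp
      qed
      thus ?thesis unfolding occ_count_def using d0 by simp
    qed
    moreover have "is_inf_factor u (q @ F)" using qF by simp
    ultimately have "q \<in> return_words u F" unfolding return_words_def by simp
    hence "length q \<le> M" unfolding M_def using finRW by simp
    thus ?thesis using jd q_def by simp
  qed
  define j0 where "j0 = (LEAST j. j \<in> S)"
  have j0S: "j0 \<in> S" unfolding j0_def using infS by (metis LeastI_ex finite.emptyI ex_in_conv)
  have cover: "\<exists>j. j \<in> S \<and> j \<le> i \<and> i < nxt j" if "j0 \<le> i" for i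
    using that
  proof (induction i rule: dec_induct)
    case base then show ?case using j0S nxt1[of j0] by auto
  next
    case (step i)
    then obtain j where j: "j \<in> S" "j \<le> i" "i < nxt j" by auto
    show ?case
    proof (cases "Suc i < nxt j")
      case True then show ?thesis using j by auto
    next
      case False
      hence "Suc i = nxt j" using j by simp
      thus ?thesis using nxt1[of j] nxt1[of "nxt j"] by auto
    qed
  qed
  have "\<forall>i. \<exists>j. i \<le> j \<and> j \<le> i + (j0 + M) \<and> occ u F j"
  proof
    fix i show "\<exists>j. i \<le> j \<and> j \<le> i + (j0 + M) \<and> occ u F j"
    proof (cases "i < j0")
      case True then show ?thesis using j0S S_def by (intro exI[of _ j0]) auto
    next
      case False
      then obtain j where j: "j \<in> S" "j \<le> i" "i < nxt j" using cover by (meson not_less)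
      have "nxt j \<le> i + (j0 + M)" using gap[OF j(1)] j(2) by simp
      thus ?thesis using j nxt1[of j] S_def by (intro exI[of _ "nxt j"]) auto
    qed
  qed
  thus ?thesis unfolding synd_def by blast
qed

lemma synd_sub:
  assumes "synd u F"
  shows "\<exists>L. \<forall>z. is_inf_factor u z \<and> L \<le> length z \<longrightarrow> sublist F z"
proof -
  obtain R where R: "\<And>i. \<exists>j. i \<le> j \<and> j \<le> i + R \<and> occ u F j" using assms unfolding synd_def by blast
  have "sublist F z" if fz: "is_inf_factor u z" and lz: "R + length F \<le> length z" for z
  proof -
    obtain i where i: "inf_factor_at u i (length z) = z" using fz unfolding is_inf_factor_def by blast
    obtain j where j: "i \<le> j" "j \<le> i + R" "occ u F j" using R by blast
    have "sublist (inf_factor_at u j (length F)) (inf_factor_at u i (length z))"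
      using j lz by (intro ifa_sublist) auto
    thus ?thesis using i j(3) unfolding occ_def by simp
  qed
  thus ?thesis by blast
qed

lemma synd_sub_fin:
  assumes UR: "uniformly_recurrent u" and fin: "finite S" and all: "\<forall>F\<in>S. is_inf_factor u F"
  shows "\<exists>L. \<forall>F\<in>S. \<forall>z. is_inf_factor u z \<and> L \<le> length z \<longrightarrow> sublist F z"
  using fin all
proof (induction S rule: finite_induct)
  case empty then show ?case by simp
next
  case (insert F S)
  have a1: "\<forall>F\<in>S. is_inf_factor u F" and a2: "is_inf_factor u F" using insert.prems by simp_all
  obtain L where L: "\<forall>F\<in>S. \<forall>z. is_inf_factor u z \<and> L \<le> length z \<longrightarrow> sublist F z"
    using insert.IH[OF a1] by blast
  obtain L' where L': "\<forall>z. is_inf_factor u z \<and> L' \<le> length z \<longrightarrow> sublist F z"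
    using synd_sub[OF UR_synd[OF UR a2]] by blast
  show ?case using L L' by (intro exI[of _ "max L L'"]) auto
qed

lemma max_defect:
  assumes "finite_defect \<Theta> u"
  shows "\<exists>f. is_inf_factor u f \<and> (\<forall>z. is_inf_factor u z \<longrightarrow> defect \<Theta> z \<le> defect \<Theta> f)"
proof -
  obtain K where K: "\<And>w. is_inf_factor u w \<Longrightarrow> defect \<Theta> w \<le> K" using assms unfolding finite_defect_def by blast
  have ex: "\<exists>n z. is_inf_factor u z \<and> n = nat (K - defect \<Theta> z)"
    by (rule exI[of _ "nat (K - defect \<Theta> [])"], rule exI[of _ "[]"])
       (simp add: is_inf_factor_def inf_factor_at_def)
  define n where "n = (LEAST n. \<exists>z. is_inf_factor u z \<and> n = nat (K - defect \<Theta> z))"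
  obtain f where f: "is_inf_factor u f" "n = nat (K - defect \<Theta> f)"
    using LeastI_ex[OF ex] unfolding n_def by blast
  have "defect \<Theta> z \<le> defect \<Theta> f" if "is_inf_factor u z" for z
  proof -
    have "n \<le> nat (K - defect \<Theta> z)" unfolding n_def using that by (intro Least_le) blast
    thus ?thesis using f K[OF that] K[OF f(1)] by linarith
  qed
  thus ?thesis using f by blast
qed

definition creturn :: "'a list \<Rightarrow> 'a list \<Rightarrow> bool" where
  "creturn p c \<longleftrightarrow> prefix p c \<and> suffix p c \<and> length p < length c \<and>
     (\<forall>k. 0 < k \<and> k < length c - length p \<longrightarrow> take (length p) (drop k c) \<noteq> p)"



locale URset = invo \<theta> for \<theta> :: "'a::finite \<Rightarrow> 'a" +
  fixes u :: "nat \<Rightarrow> 'a"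
  assumes UR: "uniformly_recurrent u" and FD: "finite_defect (TH \<theta>) u"
begin

definition fmax where
  "fmax = (SOME f. is_inf_factor u f \<and> (\<forall>z. is_inf_factor u z \<longrightarrow> defect \<Theta> z \<le> defect \<Theta> f))"

lemma fmax: "is_inf_factor u fmax" "is_inf_factor u z \<Longrightarrow> defect \<Theta> z \<le> defect \<Theta> fmax"
  using someI_ex[OF max_defect[OF FD]] unfolding fmax_def by blast+

definition N0 where "N0 = (SOME L. \<forall>z. is_inf_factor u z \<and> L \<le> length z \<longrightarrow> sublist fmax z)"

lemma N0: "is_inf_factor u z \<Longrightarrow> N0 \<le> length z \<Longrightarrow> sublist fmax z"
  using someI_ex[OF synd_sub[OF UR_synd[OF UR fmax(1)]]] unfolding N0_def by blast

definition "N = Suc N0"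

lemma N: "is_inf_factor u z \<Longrightarrow> N \<le> length z \<Longrightarrow> sublist fmax z" and N1: "1 \<le> N"
  using N0 unfolding N_def by auto

lemma defect_max: "is_inf_factor u z \<Longrightarrow> N \<le> length z \<Longrightarrow> defect \<Theta> z = defect \<Theta> fmax"
  using defect_mono[OF N] fmax(2) by (meson antisym)

lemma creturn_pal:
  assumes fc: "is_inf_factor u c" and cr: "creturn p c" and pp: "\<Theta> p = p" and lp: "N \<le> length p"
  shows "\<Theta> c = c"
proof -
  from cr have pc: "prefix p c" and sc: "suffix p c" and lpc: "length p < length c"
    and noint: "\<And>k. 0 < k \<Longrightarrow> k < length c - length p \<Longrightarrow> take (length p) (drop k c) \<noteq> p"
    unfolding creturn_def by auto
  have cne: "c \<noteq> []" using lpc by auto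
  define c' where "c' = butlast c"
  define a where "a = last c"
  have c: "c = c' @ [a]" using cne unfolding c'_def a_def by simp
  have pc': "prefix p c'" using pc lpc c by (metis prefix_snoc nat_less_le)
  have fc': "is_inf_factor u c'" using factor_sublist[OF fc] c by (metis sublist_append_rightI)
  have lc': "N \<le> length c'" using prefix_length_le[OF pc'] lp by simp
  have d1: "defect \<Theta> c' = defect \<Theta> fmax" using defect_max[OF fc' lc'] .
  have d2: "defect \<Theta> c = defect \<Theta> fmax" using defect_max[OF fc] lc' c by simp
  have pne: "p \<noteq> []" using lp N1 by auto
  have lastp: "last p = a"
  proof -
    obtain zs where "c = zs @ p" using sc by (auto simp: suffix_def)
    thus ?thesis using pne a_def by simp
  qed
  have ain: "a \<in> set c'" using set_mono_prefix[OF pc'] lastp pne last_in_set by blast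
  obtain q where q: "q \<in> Pal \<Theta> (c' @ [a])" "q \<notin> Pal \<Theta> c'"
    using defect_eq_new_pal[of c' a] d1 d2 c ain by auto
  have sq: "suffix q c" and pq: "\<Theta> q = q" using new_pal_suffix[OF q] c by auto
  have nsub: "\<not> sublist q c'" using q pq unfolding Pal_def by auto
  show ?thesis
  proof (cases "length q \<le> length p")
    case True
    have "suffix q p" using suffix_length_suffix[OF sq sc True] .
    hence "prefix q p" using suffix_pal_prefix pq pp by blast
    hence "prefix q c'" using pc' prefix_order.trans by blast
    thus ?thesis using nsub by auto
  next
    case False
    have "suffix p q" using suffix_length_suffix[OF sc sq] False by simp
    hence ppq: "prefix p q" using suffix_pal_prefix pq pp by blast
    define k where "k = length c - length q"
    have dq: "drop k c = q" using sq unfolding k_def by (auto simp: suffix_def)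
    have tk: "take (length p) (drop k c) = p" using ppq dq by (auto simp: prefix_def)
    show ?thesis
    proof (cases "k = 0")
      case True then show ?thesis using dq pq by simp
    next
      case False
      have "k < length c - length p" unfolding k_def using \<open>\<not> length q \<le> length p\<close> suffix_length_le[OF sq]
        by linarith
      thus ?thesis using noint[of k] False tk by simp
    qed
  qed
qed

definition E where "E x \<longleftrightarrow> (\<forall>n. is_inf_factor u (x @ inf_factor_at u 0 n))"

lemma E_Nil: "E []" unfolding E_def by simp

lemma E_factor: "E x \<Longrightarrow> is_inf_factor u x"
  unfolding E_def by (metis append_Nil2 ifa_0)

lemma E_Cons:
  assumes Ex: "E x" shows "\<exists>a. E (a # x)"
proof -
  have "\<forall>n. \<exists>a. is_inf_factor u (a # x @ inf_factor_at u 0 n)"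
  proof
    fix n
    define F where "F = x @ inf_factor_at u 0 n"
    have "infinite {i. inf_factor_at u i (length F) = F}"
      using UR Ex unfolding uniformly_recurrent_def recurrent_def E_def F_def by auto
    then obtain i where i0: "i > 0" and oc: "inf_factor_at u i (length F) = F"
      using infinite_nat_iff_unbounded[THEN iffD1, rule_format, of _ 0] by blast
    have "inf_factor_at u (i - 1) (Suc (length F)) = u (i - 1) # F"
      using ifa_Cons[of u "i - 1" "length F"] oc i0 by simp
    thus "\<exists>a. is_inf_factor u (a # x @ inf_factor_at u 0 n)" unfolding F_def by (metis factor_ifa)
  qed
  then obtain A where A: "\<And>n. is_inf_factor u (A n # x @ inf_factor_at u 0 n)" by metis
  have "\<exists>a. infinite {n. A n = a}"
  proof (rule ccontr)
    assume "\<not> (\<exists>a. infinite {n. A n = a})"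
    hence "\<forall>a. finite {n. A n = a}" by auto
    hence "finite (\<Union>a. {n. A n = a})" by simp
    moreover have "(\<Union>a. {n. A n = a}) = UNIV" by auto
    ultimately show False by simp
  qed
  then obtain a where inf: "infinite {n. A n = a}" by blast
  have "E (a # x)" unfolding E_def
  proof
    fix n
    obtain n' where n': "n' \<ge> n" "A n' = a" using inf unfolding infinite_nat_iff_unbounded_le by blast
    hence f: "is_inf_factor u (a # x @ inf_factor_at u 0 n')" using A by metis
    have "inf_factor_at u 0 n' = inf_factor_at u 0 n @ inf_factor_at u n (n' - n)"
      using ifa_add[of u 0 n "n' - n"] n' by simp
    hence "sublist (a # x @ inf_factor_at u 0 n) (a # x @ inf_factor_at u 0 n')"
      by (metis append_Cons append_assoc sublist_append_rightI)
    thus "is_inf_factor u ((a # x) @ inf_factor_at u 0 n)" using factor_sublist f by simp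
  qed
  thus ?thesis by blast
qed

lemma E_long: "\<exists>x. E x \<and> length x = m"
proof (induction m)
  case 0 then show ?case using E_Nil by auto
next
  case (Suc m)
  then obtain x where "E x" "length x = m" by blast
  then obtain a where "E (a # x)" using E_Cons by blast
  thus ?case using \<open>length x = m\<close> by (intro exI[of _ "a # x"]) auto
qed

lemma E_suffix: "E x \<Longrightarrow> suffix y x \<Longrightarrow> E y"
  unfolding E_def suffix_def using factor_sublist
  by (metis append_assoc sublist_append_leftI)

lemma long_pal: "\<exists>w. \<Theta> w = w \<and> N \<le> length w \<and> E w"
proof -
  define S1 where "S1 = {[b] | b. is_inf_factor u [b]}"
  define S2 where "S2 = {q. length q < N \<and> is_inf_factor u q}"
  have fin1: "finite S1"
  proof -
    have "S1 \<subseteq> (\<lambda>b. [b]) ` UNIV" unfolding S1_def by auto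
    moreover have "finite ((\<lambda>b::'a. [b]) ` UNIV)" by (rule finite_imageI) simp
    ultimately show ?thesis by (rule finite_subset)
  qed
  have fin2: "finite S2"
  proof -
    have "S2 \<subseteq> {xs. set xs \<subseteq> UNIV \<and> length xs \<le> N}" unfolding S2_def by auto
    moreover have "finite {xs. set xs \<subseteq> (UNIV::'a set) \<and> length xs \<le> N}"
      by (rule finite_lists_length_le) simp
    ultimately show ?thesis by (rule finite_subset)
  qed
  obtain L1 where L1: "\<And>F z. F \<in> S1 \<Longrightarrow> is_inf_factor u z \<Longrightarrow> L1 \<le> length z \<Longrightarrow> sublist F z"
    using synd_sub_fin[OF UR fin1] unfolding S1_def by blast
  obtain L2 where L2: "\<And>F z. F \<in> S2 \<Longrightarrow> is_inf_factor u z \<Longrightarrow> L2 \<le> length z \<Longrightarrow> sublist F z"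
    using synd_sub_fin[OF UR fin2] unfolding S2_def by blast
  obtain x where Ex: "E x" and lx: "length x = N + L1 + L2 + 1" using E_long by blast
  have fx: "is_inf_factor u x" using E_factor[OF Ex] .
  define c' where "c' = butlast x"
  define a where "a = last x"
  have xne: "x \<noteq> []" using lx by auto
  have x: "x = c' @ [a]" using xne unfolding c'_def a_def by simp
  have fc': "is_inf_factor u c'" using factor_sublist[OF fx] x by (metis sublist_append_rightI)
  have lc': "length c' = N + L1 + L2" using lx x by simp
  have d1: "defect \<Theta> c' = defect \<Theta> fmax" using defect_max[OF fc'] lc' by simp
  have d2: "defect \<Theta> x = defect \<Theta> fmax" using defect_max[OF fx] lx by simp
  have "is_inf_factor u [a]" using factor_sublist[OF fx] x by (metis sublist_append_leftI)
  hence "sublist [a] c'" using L1[of "[a]" c'] fc' lc' unfolding S1_def by auto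
  hence ain: "a \<in> set c'" using set_mono_sublist by fastforce
  obtain q where q: "q \<in> Pal \<Theta> (c' @ [a])" "q \<notin> Pal \<Theta> c'"
    using defect_eq_new_pal[of c' a] d1 d2 x ain by auto
  have sq: "suffix q x" and pq: "\<Theta> q = q" using new_pal_suffix[OF q] x by auto
  have nsub: "\<not> sublist q c'" using q pq unfolding Pal_def by auto
  have fq: "is_inf_factor u q" using factor_sublist[OF fx] sq by blast
  have "N \<le> length q"
  proof (rule ccontr)
    assume "\<not> N \<le> length q"
    hence "q \<in> S2" using fq unfolding S2_def by simp
    hence "sublist q c'" using L2 fc' lc' by simp
    thus False using nsub by simp
  qed
  thus ?thesis using pq E_suffix[OF Ex sq] by blast
qed

end


locale Der = URset \<theta> u for \<theta> :: "'a::finite \<Rightarrow> 'a" and u +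
  fixes w :: "'a list"
  assumes wpal: "\<Theta> w = w" and wN: "N \<le> length w" and wE: "E w"
begin

definition uu :: "nat \<Rightarrow> 'a" where "uu n = (if n < length w then w ! n else u (n - length w))"

lemma uu_ifa0: "inf_factor_at uu 0 n = take n (w @ inf_factor_at u 0 n)"
proof (rule nth_equalityI)
  show "length (inf_factor_at uu 0 n) = length (take n (w @ inf_factor_at u 0 n))" by simp
next
  fix k assume "k < length (inf_factor_at uu 0 n)"
  hence k: "k < n" by simp
  show "inf_factor_at uu 0 n ! k = take n (w @ inf_factor_at u 0 n) ! k"
    using k by (auto simp: uu_def nth_append)
qed

lemma uu_factor: "is_inf_factor uu z \<Longrightarrow> is_inf_factor u z"
proof -
  assume "is_inf_factor uu z"
  then obtain i where i: "inf_factor_at uu i (length z) = z" unfolding is_inf_factor_def by blast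
  have "sublist z (inf_factor_at uu 0 (i + length z))" using ifa_sublist[of 0 i "length z" "i + length z" uu] i by simp
  also have "inf_factor_at uu 0 (i + length z) = take (i + length z) (w @ inf_factor_at u 0 (i + length z))"
    by (rule uu_ifa0)
  finally have "sublist z (w @ inf_factor_at u 0 (i + length z))"
    by (metis sublist_order.order.trans sublist_take)
  moreover have "is_inf_factor u (w @ inf_factor_at u 0 (i + length z))" using wE unfolding E_def by blast
  ultimately show ?thesis using factor_sublist by blast
qed

lemma uu_shift[simp]: "uu (n + length w) = u n" by (simp add: uu_def)

lemma occ_shift: "occ u F p \<Longrightarrow> occ uu F (p + length w)"
  unfolding occ_iff by (metis add.commute add.left_commute uu_shift)

abbreviation "occW j \<equiv> occ uu w j"

lemma occW0: "occW 0" unfolding occ_iff by (simp add: uu_def)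

lemma w_factor: "is_inf_factor u w" using E_factor[OF wE] .

lemma occW_inf: "\<exists>j>n. occW j"
proof -
  have "infinite {i. inf_factor_at u i (length w) = w}"
  proof -
    have r: "recurrent u" using UR unfolding uniformly_recurrent_def by (rule conjunct1)
    show ?thesis using r[unfolded recurrent_def, rule_format, OF w_factor] .
  qed
  then obtain p where "p > n" "inf_factor_at u p (length w) = w"
    using infinite_nat_iff_unbounded[THEN iffD1, rule_format, of _ n] by blast
  hence "p > n" "occ u w p" unfolding occ_def by auto
  thus ?thesis using occ_shift by (intro exI[of _ "p + length w"]) auto
qed

primrec T :: "nat \<Rightarrow> nat" where
  "T 0 = 0"
| "T (Suc n) = (LEAST j. T n < j \<and> occW j)"

declare T.simps(2)[simp del]

lemma T_Suc_prop: "T n < T (Suc n) \<and> occW (T (Suc n))"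
  using LeastI_ex[OF occW_inf[of "T n"]] by (simp add: T.simps(2))

lemma T_occ: "occW (T n)" using T_Suc_prop occW0 by (cases n) auto

lemma T_less: "T n < T (Suc n)" using T_Suc_prop by blast

lemma T_gap: "T n < k \<Longrightarrow> k < T (Suc n) \<Longrightarrow> \<not> occW k"
  using not_less_Least[of k "\<lambda>j. T n < j \<and> occW j"] by (auto simp: T.simps(2))

lemma T_smono: "strict_mono T" unfolding strict_mono_Suc_iff using T_less by blast

lemma T_less_iff: "T i < T j \<longleftrightarrow> i < j" using strict_mono_less[OF T_smono] .
lemma T_le_iff: "T i \<le> T j \<longleftrightarrow> i \<le> j" using strict_mono_less_eq[OF T_smono] .

lemma T_add: "T i + k \<le> T (i + k)"
proof (induction k)
  case 0 then show ?case by simp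
next
  case (Suc k) then show ?case using T_less[of "i + k"] by simp
qed

lemma T_next_eq:
  assumes "T n < y" "occW y" "\<And>z. T n < z \<Longrightarrow> z < y \<Longrightarrow> \<not> occW z"
  shows "T (Suc n) = y"
proof -
  have "T (Suc n) \<le> y" unfolding T.simps(2) using assms by (intro Least_le) auto
  moreover have "\<not> T (Suc n) < y" using assms(3)[of "T (Suc n)"] T_Suc_prop by blast
  ultimately show ?thesis by simp
qed

lemma T_cover: "\<exists>j. T j \<le> q \<and> q < T (Suc j)"
proof (induction q)
  case 0 then show ?case using T_less[of 0] by (intro exI[of _ 0]) simp
next
  case (Suc q)
  then obtain j where j: "T j \<le> q" "q < T (Suc j)" by blast
  show ?case
  proof (cases "Suc q < T (Suc j)")
    case True then show ?thesis using j by (intro exI[of _ j]) simp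
  next
    case False
    hence "Suc q = T (Suc j)" using j by simp
    thus ?thesis using T_less[of "Suc j"] by (intro exI[of _ "Suc j"]) simp
  qed
qed

lemma T_range: "occW q \<Longrightarrow> \<exists>j. q = T j"
proof -
  assume oq: "occW q"
  obtain j where j: "T j \<le> q" "q < T (Suc j)" using T_cover by blast
  have "q = T j" using T_gap[of j q] j oq by (cases "T j < q") auto
  thus ?thesis by blast
qed

definition ret :: "nat \<Rightarrow> 'a list" where
  "ret i = inf_factor_at uu (T i) (T (Suc i) - T i)"

lemma ret_w: "ret i @ w = inf_factor_at uu (T i) (T (Suc i) - T i + length w)"
proof -
  have "inf_factor_at uu (T i + (T (Suc i) - T i)) (length w) = w"
    using T_occ[of "Suc i"] T_less[of i] unfolding occ_def by simp
  thus ?thesis unfolding ret_def by (simp add: ifa_add)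
qed

lemma ret_ne: "ret i \<noteq> []"
  unfolding ret_def using T_less[of i] by (metis ifa_len less_numeral_extra(3) list.size(3) zero_less_diff)

lemma ret_creturn: "creturn w (ret i @ w)"
proof -
  define d where "d = T (Suc i) - T i"
  have d0: "0 < d" using T_less[of i] d_def by simp
  have X: "ret i @ w = inf_factor_at uu (T i) (d + length w)" using ret_w d_def by simp
  have "prefix w (ret i @ w)"
  proof -
    have "take (length w) (ret i @ w) = w" using X T_occ[of i] unfolding occ_def by (simp add: ifa_take)
    thus ?thesis by (metis take_is_prefix)
  qed
  moreover have "suffix w (ret i @ w)" by (simp add: suffix_def)
  moreover have "length w < length (ret i @ w)" using ret_ne by simp
  moreover have "take (length w) (drop k (ret i @ w)) \<noteq> w"
    if k: "0 < k" "k < length (ret i @ w) - length w" for k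
  proof
    assume "take (length w) (drop k (ret i @ w)) = w"
    hence "occW (T i + k)" unfolding X occ_def using k X ifa_take_drop[of k "length w" "d + length w" uu "T i"]
      by (simp add: d_def)
    moreover have "T i < T i + k" "T i + k < T (Suc i)" using k X d_def by auto
    ultimately show False using T_gap by blast
  qed
  ultimately show ?thesis unfolding creturn_def by blast
qed

lemma ret_pal: "\<Theta> (ret i @ w) = ret i @ w"
  using creturn_pal[OF _ ret_creturn wpal wN] uu_factor ret_w by (metis factor_ifa)

definition v :: "nat \<Rightarrow> nat" where "v i = to_nat (ret i)"
definition phi :: "nat \<Rightarrow> 'a list" where "phi c = drop (length w) (from_nat c @ w)"
definition Phi :: "nat list \<Rightarrow> 'a list" where "Phi cs = concat (map from_nat cs) @ w"

lemma from_v[simp]: "from_nat (v i) = ret i" unfolding v_def by simp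

lemma concat_v: "concat (map from_nat (map v [i..<i+m])) = inf_factor_at uu (T i) (T (i + m) - T i)"
proof (induction m)
  case 0 then show ?case by simp
next
  case (Suc m)
  have "concat (map from_nat (map v [i..<i + Suc m])) = inf_factor_at uu (T i) (T (i + m) - T i) @ ret (i + m)"
    using Suc by simp
  also have "\<dots> = inf_factor_at uu (T i) (T (i + m) - T i + (T (Suc (i + m)) - T (i + m)))"
    using ifa_add[of uu "T i" "T (i + m) - T i" "T (Suc (i + m)) - T (i + m)"] T_le_iff[of i "i + m"]
    by (simp add: ret_def)
  also have "T (i + m) - T i + (T (Suc (i + m)) - T (i + m)) = T (i + Suc m) - T i"
    using T_le_iff[of i "i + m"] T_less[of "i + m"] by simp
  finally show ?case .
qed

lemma Phi_v: "Phi (map v [i..<i+m]) = inf_factor_at uu (T i) (T (i + m) - T i + length w)"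
proof -
  have "inf_factor_at uu (T i + (T (i + m) - T i)) (length w) = w"
    using T_occ[of "i + m"] T_le_iff[of i "i + m"] unfolding occ_def by simp
  thus ?thesis unfolding Phi_def concat_v by (simp add: ifa_add)
qed

lemma morph: "is_morph_image phi v u"
proof -
  have mp: "morph_prefix phi v n = inf_factor_at uu (length w) (T n)" for n
  proof (induction n)
    case 0 then show ?case by (simp add: morph_prefix_def)
  next
    case (Suc n)
    have "morph_prefix phi v (Suc n) = morph_prefix phi v n @ phi (v n)"
      by (simp add: morph_prefix_def)
    also have "phi (v n) = drop (length w) (ret n @ w)" by (simp add: phi_def)
    also have "\<dots> = inf_factor_at uu (T n + length w) (T (Suc n) - T n)"
      unfolding ret_w using ifa_take_drop[of "length w" "T (Suc n) - T n" "T (Suc n) - T n + length w" uu "T n"]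
      by (simp add: add.commute)
    also have "morph_prefix phi v n @ \<dots> = inf_factor_at uu (length w) (T (Suc n))"
      using Suc T_less[of n] ifa_add[of uu "length w" "T n" "T (Suc n) - T n"] by (simp add: add.commute)
    finally show ?case .
  qed
  have sh: "inf_factor_at uu (length w) m = inf_factor_at u 0 m" for m
    by (rule nth_equalityI) (auto simp: add.commute)
  show ?thesis unfolding is_morph_image_def
  proof (intro conjI allI)
    fix n show "inf_factor_at u 0 (length (morph_prefix phi v n)) = morph_prefix phi v n"
      using mp sh by simp
  next
    fix M show "\<exists>n. M \<le> length (morph_prefix phi v n)"
      using mp T_add[of 0 M] by (intro exI[of _ M]) simp
  qed
qed

end


lemma synd_UR:
  fixes v :: "nat \<Rightarrow> 'b"
  assumes S: "\<And>x. is_inf_factor v x \<Longrightarrow> synd v x" and fin: "finite (range v)"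
  shows "uniformly_recurrent v"
proof -
  have rec: "recurrent v"
    unfolding recurrent_def
  proof (intro allI impI)
    fix x assume "is_inf_factor v x"
    then obtain R where R: "\<And>i. \<exists>j. i \<le> j \<and> j \<le> i + R \<and> occ v x j" using S unfolding synd_def by blast
    show "infinite {i. inf_factor_at v i (length x) = x}"
      unfolding infinite_nat_iff_unbounded
    proof
      fix m obtain j where "Suc m \<le> j" "occ v x j" using R by blast
      thus "\<exists>n>m. n \<in> {i. inf_factor_at v i (length x) = x}" by (intro exI[of _ j]) (auto simp: occ_def)
    qed
  qed
  have "finite (return_words v x)" if fx: "is_inf_factor v x" for x
  proof -
    obtain R where R: "\<And>i. \<exists>j. i \<le> j \<and> j \<le> i + R \<and> occ v x j" using S[OF fx] unfolding synd_def by blast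
    have "return_words v x \<subseteq> {q. set q \<subseteq> range v \<and> length q \<le> Suc R}"
    proof
      fix q assume q: "q \<in> return_words v x"
      hence fq: "is_inf_factor v (q @ x)" and px: "prefix x (q @ x)" and cnt: "occ_count x (q @ x) = 2"
        unfolding return_words_def by auto
      obtain i where i: "inf_factor_at v i (length (q @ x)) = q @ x" using fq unfolding is_inf_factor_def by blast
      have "set (q @ x) \<subseteq> range v" using i by (metis inf_factor_at_def set_map image_subsetI rangeI
          image_mono subset_UNIV order_trans)
      hence sq: "set q \<subseteq> range v" by simp
      have "length q \<le> Suc R"
      proof (rule ccontr)
        assume long: "\<not> length q \<le> Suc R"
        obtain j where j: "Suc i \<le> j" "j \<le> Suc i + R" "occ v x j" using R by blast
        define k where "k = j - i"
        define Occ where "Occ = {k. k + length x \<le> length (q @ x) \<and> take (length x) (drop k (q @ x)) = x}"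
        obtain zs where zs: "q @ x = x @ zs" using px by (auto simp: prefix_def)
        have "take (length x) (drop 0 (q @ x)) = x" by (simp only: drop_0 zs) simp
        hence o0: "0 \<in> Occ" unfolding Occ_def by simp
        have o1: "length q \<in> Occ" unfolding Occ_def by simp
        have k: "0 < k" "k < length q" using j long k_def by auto
        have "take (length x) (drop k (q @ x)) = inf_factor_at v (i + k) (length x)"
          using ifa_take_drop[of k "length x" "length (q @ x)" v i] i k by simp
        also have "\<dots> = x" using j(3) k_def j(1) unfolding occ_def by simp
        finally have o2: "k \<in> Occ" unfolding Occ_def using k by simp
        have finO: "finite Occ" unfolding Occ_def by (rule finite_subset[of _ "{..length (q @ x)}"]) auto
        have "{0, k, length q} \<subseteq> Occ" using o0 o1 o2 by simp
        hence "card {0, k, length q} \<le> card Occ" using finO by (rule card_mono[rotated])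
        moreover have "card {0, k, length q} = 3" using k by (auto simp: card_insert_if)
        moreover have "card Occ = 2" using cnt unfolding occ_count_def Occ_def by simp
        ultimately show False by simp
      qed
      thus "q \<in> {q. set q \<subseteq> range v \<and> length q \<le> Suc R}" using sq by simp
    qed
    moreover have "finite {q. set q \<subseteq> range v \<and> length q \<le> Suc R}"
      using finite_lists_length_le[OF fin] .
    ultimately show ?thesis by (rule finite_subset)
  qed
  thus ?thesis using rec unfolding uniformly_recurrent_def by blast
qed

context Der
begin

lemma ifa_eq: "(\<And>d. d < n \<Longrightarrow> f (a + d) = f (b + d)) \<Longrightarrow> inf_factor_at f a n = inf_factor_at f b n"
  by (rule nth_equalityI) auto

lemma parse:
  assumes oc: "occ uu (inf_factor_at uu (T i) (T (i + m) - T i + length w)) q"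
  shows "\<exists>j. q = T j \<and> (\<forall>k\<le>m. T (j + k) = q + (T (i + k) - T i)) \<and>
     (\<forall>d < T (i + m) - T i + length w. uu (q + d) = uu (T i + d))"
proof -
  define F where "F = inf_factor_at uu (T i) (T (i + m) - T i + length w)"
  have lenF: "length F = T (i + m) - T i + length w" unfolding F_def by simp
  have eqv: "uu (q + d) = uu (T i + d)" if "d < length F" for d
    using oc that unfolding occ_iff F_def[symmetric] by (simp add: F_def)
  have tr: "occW (q + e) \<longleftrightarrow> occW (T i + e)" if "e + length w \<le> length F" for e
  proof -
    have "\<forall>k<length w. uu (q + e + k) = uu (T i + e + k)" using eqv[of "e + _"] that by (simp add: add.assoc)
    thus ?thesis unfolding occ_iff by simp
  qed
  have Tim: "T i \<le> T (i + m)" using T_le_iff by simp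
  have "occW q" using tr[of 0] T_occ[of i] lenF by simp
  then obtain j where qj: "q = T j" using T_range by blast
  have "\<forall>k\<le>m. T (j + k) = q + (T (i + k) - T i)"
  proof (intro allI impI)
    fix k assume "k \<le> m" thus "T (j + k) = q + (T (i + k) - T i)"
    proof (induction k)
      case 0 then show ?case using qj by simp
    next
      case (Suc k)
      hence IH: "T (j + k) = q + (T (i + k) - T i)" by simp
      have m1: "T i \<le> T (i + k)" "T (i + k) < T (Suc (i + k))" "T (Suc (i + k)) \<le> T (i + m)"
        using T_le_iff T_less Suc.prems by auto
      define y where "y = q + (T (Suc (i + k)) - T i)"
      have "T (Suc (j + k)) = y"
      proof (rule T_next_eq)
        show "T (j + k) < y" using IH m1 y_def by simp
        show "occW y" using tr[of "T (Suc (i + k)) - T i"] T_occ[of "Suc (i + k)"] m1 lenF y_def by simp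
        fix z assume z: "T (j + k) < z" "z < y"
        define e where "e = z - q"
        have e: "z = q + e" "T (i + k) < T i + e" "T i + e < T (Suc (i + k))" "e + length w \<le> length F"
          using z IH y_def m1 e_def lenF by auto
        thus "\<not> occW z" using tr[of e] T_gap[of "i + k" "T i + e"] by simp
      qed
      thus ?case using y_def by simp
    qed
  qed
  thus ?thesis using qj eqv lenF by auto
qed

lemma parse_v:
  assumes oc: "occ uu (inf_factor_at uu (T i) (T (i + m) - T i + length w)) q"
  shows "\<exists>j. q = T j \<and> map v [j..<j+m] = map v [i..<i+m]"
proof -
  obtain j where qj: "q = T j" and TT: "\<And>k. k \<le> m \<Longrightarrow> T (j + k) = q + (T (i + k) - T i)"
    and eqv: "\<And>d. d < T (i + m) - T i + length w \<Longrightarrow> uu (q + d) = uu (T i + d)"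
    using parse[OF oc] by blast
  have "v (j + k) = v (i + k)" if k: "k < m" for k
  proof -
    have a1: "T (j + k) = q + (T (i + k) - T i)" using TT k by simp
    have a2: "T (Suc (j + k)) = q + (T (Suc (i + k)) - T i)" using TT[of "Suc k"] k by simp
    have m1: "T i \<le> T (i + k)" "T (i + k) < T (Suc (i + k))" "T (Suc (i + k)) \<le> T (i + m)"
      using T_le_iff T_less k by auto
    have "ret (j + k) = inf_factor_at uu (q + (T (i + k) - T i)) (T (Suc (i + k)) - T (i + k))"
      unfolding ret_def a1 a2 using m1 by simp
    also have "\<dots> = inf_factor_at uu (T (i + k)) (T (Suc (i + k)) - T (i + k))"
    proof (rule ifa_eq)
      fix d assume "d < T (Suc (i + k)) - T (i + k)"
      hence "T (i + k) - T i + d < T (i + m) - T i + length w" using m1 by linarith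
      thus "uu (q + (T (i + k) - T i) + d) = uu (T (i + k) + d)"
        using eqv[of "T (i + k) - T i + d"] m1 by (simp add: add.assoc)
    qed
    finally have "ret (j + k) = ret (i + k)" unfolding ret_def .
    thus ?thesis unfolding v_def by simp
  qed
  hence "map v [j..<j+m] = map v [i..<i+m]" by (intro nth_equalityI) auto
  thus ?thesis using qj by blast
qed

lemma v_factor_map: "is_inf_factor v x \<Longrightarrow> \<exists>i. x = map v [i..<i + length x]"
  unfolding is_inf_factor_def inf_factor_at_def by metis

lemma v_synd: assumes fx: "is_inf_factor v x" shows "synd v x"
proof -
  define m where "m = length x"
  obtain i where xi: "x = map v [i..<i + m]" using v_factor_map[OF fx] m_def by blast
  define F where "F = inf_factor_at uu (T i) (T (i + m) - T i + length w)"
  have fF: "is_inf_factor u F" unfolding F_def using uu_factor factor_ifa by blast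
  obtain R where R: "\<And>a. \<exists>p. a \<le> p \<and> p \<le> a + R \<and> occ u F p" using UR_synd[OF UR fF] unfolding synd_def by blast
  have "\<exists>b. a \<le> b \<and> b \<le> a + (R + length w) \<and> occ v x b" for a
  proof -
    obtain p where p: "T a \<le> p" "p \<le> T a + R" "occ u F p" using R by blast
    have "occ uu F (p + length w)" using occ_shift[OF p(3)] .
    then obtain b where b: "p + length w = T b" "map v [b..<b+m] = map v [i..<i+m]"
      using parse_v unfolding F_def by blast
    have ab: "a \<le> b" using b(1) p(1) T_le_iff[of a b] by simp
    have "T a + (b - a) \<le> T b" using T_add[of a "b - a"] ab by simp
    hence "T a + (b - a) \<le> T a + R + length w" using b(1) p(2) by simp
    hence "b - a \<le> R + length w" by simp
    hence "b \<le> a + (R + length w)" using ab by linarith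
    moreover have "occ v x b" unfolding occ_def inf_factor_at_def m_def[symmetric] using b(2) xi by simp
    ultimately show ?thesis using ab by blast
  qed
  thus ?thesis unfolding synd_def by blast
qed

lemma T_gap_bound: "\<exists>G. \<forall>i. T (Suc i) - T i \<le> G"
proof -
  obtain R where R: "\<And>a. \<exists>p. a \<le> p \<and> p \<le> a + R \<and> occ u w p" using UR_synd[OF UR w_factor] unfolding synd_def by blast
  have "T (Suc i) - T i \<le> Suc R + length w" for i
  proof -
    obtain p where p: "Suc (T i) \<le> p" "p \<le> Suc (T i) + R" "occ u w p" using R by blast
    have "T (Suc i) \<le> p + length w" unfolding T.simps(2) using occ_shift[OF p(3)] p(1)
      by (intro Least_le) simp
    thus ?thesis using p(2) by simp
  qed
  thus ?thesis by blast
qed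

lemma v_range_finite: "finite (range v)"
proof -
  obtain G where G: "\<And>i. T (Suc i) - T i \<le> G" using T_gap_bound by blast
  have "range v \<subseteq> to_nat ` {xs. set xs \<subseteq> (UNIV::'a set) \<and> length xs \<le> G}"
    unfolding v_def ret_def using G by auto
  moreover have "finite (to_nat ` {xs. set xs \<subseteq> (UNIV::'a set) \<and> length xs \<le> G})"
    by (rule finite_imageI, rule finite_lists_length_le) simp
  ultimately show ?thesis by (rule finite_subset)
qed

lemma v_UR: "uniformly_recurrent v"
  using synd_UR[OF v_synd v_range_finite] .

end


context Der
begin

definition valid :: "nat \<Rightarrow> bool" where
  "valid c \<longleftrightarrow> (from_nat c :: 'a list) \<noteq> [] \<and> creturn w (from_nat c @ w) \<and>
     to_nat (from_nat c :: 'a list) = c \<and> \<Theta> (from_nat c @ w) = from_nat c @ w"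

lemma valid_v: "valid (v i)"
  using ret_ne ret_creturn ret_pal unfolding valid_def by (simp add: v_def)

lemma Phi_Nil[simp]: "Phi [] = w" by (simp add: Phi_def)
lemma Phi_Cons: "Phi (c # cs) = from_nat c @ Phi cs" by (simp add: Phi_def)

lemma Phi_prefix: "\<forall>c\<in>set cs. valid c \<Longrightarrow> prefix w (Phi cs)"
proof (induction cs)
  case Nil then show ?case by simp
next
  case (Cons c cs)
  have "prefix w (from_nat c @ w)" using Cons.prems unfolding valid_def creturn_def by simp
  moreover have "prefix (from_nat c @ w) (from_nat c @ Phi cs)" using Cons by simp
  ultimately show ?case unfolding Phi_Cons using prefix_order.trans by blast
qed

lemma Phi_len: "length w \<le> length (Phi cs)" by (simp add: Phi_def)

lemma Phi_TH: "\<forall>c\<in>set cs. valid c \<Longrightarrow> \<Theta> (Phi cs) = Phi (rev cs)"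
proof (induction cs)
  case Nil then show ?case using wpal by simp
next
  case (Cons c cs)
  have IH: "\<Theta> (Phi cs) = Phi (rev cs)" using Cons by simp
  have vc: "\<Theta> (from_nat c @ w) = from_nat c @ w" using Cons.prems unfolding valid_def by simp
  have "w @ \<Theta> (from_nat c) = from_nat c @ w" using vc wpal by (metis TH_app)
  hence "\<Theta> (Phi (c # cs)) = concat (map from_nat (rev cs)) @ from_nat c @ w"
    unfolding Phi_Cons TH_app IH by (simp add: Phi_def)
  also have "\<dots> = Phi (rev (c # cs))" by (simp add: Phi_def)
  finally show ?case .
qed

lemma app_split: "a @ X = b @ Y \<Longrightarrow> length a \<le> length b \<Longrightarrow> b = a @ drop (length a) b \<and> X = drop (length a) b @ Y"
  by (metis append_eq_append_conv_if append_take_drop_id)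

lemma Phi_inj:
  "\<forall>c\<in>set xs. valid c \<Longrightarrow> \<forall>c\<in>set ys. valid c \<Longrightarrow> Phi xs = Phi ys \<Longrightarrow> xs = ys"
proof (induction xs arbitrary: ys)
  case Nil
  show ?case
  proof (cases ys)
    case Nil then show ?thesis by simp
  next
    case (Cons y ys')
    have "from_nat y \<noteq> ([] :: 'a list)" using Nil.prems Cons unfolding valid_def by simp
    hence l1: "0 < length (from_nat y :: 'a list)" by simp
    have "length w < length (Phi ys)" unfolding Cons Phi_Cons length_append using Phi_len[of ys'] l1 by linarith
    thus ?thesis using Nil.prems by simp
  qed
next
  case (Cons x xs)
  show ?case
  proof (cases ys)
    case Nil
    have "from_nat x \<noteq> ([] :: 'a list)" using Cons.prems unfolding valid_def by simp
    hence l1: "0 < length (from_nat x :: 'a list)" by simp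
    have "length w < length (Phi (x # xs))" unfolding Phi_Cons length_append using Phi_len[of xs] l1 by linarith
    thus ?thesis using Cons.prems Nil by simp
  next
    case (Cons y ys')
    note ys = this
    define a :: "'a list" where "a = from_nat x"
    define b :: "'a list" where "b = from_nat y"
    have vx: "valid x" and vxs: "\<forall>c\<in>set xs. valid c" using Cons.prems by auto
    have vy: "valid y" and vys: "\<forall>c\<in>set ys'. valid c" using Cons.prems ys by auto
    have eq: "a @ Phi xs = b @ Phi ys'" using Cons.prems ys unfolding a_def b_def by (simp add: Phi_Cons)
    obtain s where s: "Phi xs = w @ s" using Phi_prefix[OF vxs] by (auto simp: prefix_def)
    obtain r where r: "Phi ys' = w @ r" using Phi_prefix[OF vys] by (auto simp: prefix_def)
    have noc: False if lt: "length a < length b" and va: "a \<noteq> []" and crb: "creturn w (b @ w)"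
      and e: "a @ w @ s = b @ w @ r" for a b s r
    proof -
      obtain t where t: "b = a @ t" "w @ s = t @ w @ r" using app_split[OF e] lt by auto
      have "take (length w) (drop (length a) (b @ w)) = take (length w) (t @ w)" using t by simp
      also have "\<dots> = take (length w) (t @ w @ r)" by (simp add: take_append)
      also have "\<dots> = w" using t(2) by (metis append_eq_conv_conj)
      finally have "take (length w) (drop (length a) (b @ w)) = w" .
      moreover have "0 < length a" "length a < length (b @ w) - length w" using va lt by auto
      ultimately show False using crb unfolding creturn_def by blast
    qed
    have ane: "a \<noteq> []" and bne: "b \<noteq> []" using vx vy unfolding valid_def a_def b_def by auto
    have cra: "creturn w (a @ w)" and crb: "creturn w (b @ w)" using vx vy unfolding valid_def a_def b_def by auto
    have e1: "a @ w @ s = b @ w @ r" using eq s r by simp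
    have "length a = length b"
    proof (rule ccontr)
      assume "length a \<noteq> length b"
      hence "length a < length b \<or> length b < length a" by auto
      thus False using noc[of a b s r] noc[of b a r s] ane bne cra crb e1 by metis
    qed
    hence ab: "a = b" and "Phi xs = Phi ys'" using eq by auto
    hence "xs = ys'" using Cons.IH vxs vys by blast
    moreover have "x = y" using ab vx vy unfolding valid_def a_def b_def by metis
    ultimately show ?thesis using ys by simp
  qed
qed

lemma v_pal_return:
  assumes fc: "is_inf_factor v c" and cr: "creturn p c" and pp: "rev p = p"
  shows "rev c = c"
proof (cases "p = []")
  case True
  have "length c \<le> 1"
  proof (rule ccontr)
    assume "\<not> length c \<le> 1"
    hence "0 < (1::nat)" "1 < length c - length p" using True by auto
    thus False using cr True unfolding creturn_def by auto
  qed
  thus ?thesis by (cases c) auto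
next
  case False
  define m where "m = length c"
  define l where "l = length p"
  obtain i where ci: "inf_factor_at v i m = c" using fc unfolding is_inf_factor_def m_def by blast
  have cmap: "c = map v [i..<i + m]" using ci by (simp add: inf_factor_at_def)
  from cr have pc: "prefix p c" and sc: "suffix p c" and lm: "l < m"
    and noint: "\<And>k. 0 < k \<Longrightarrow> k < m - l \<Longrightarrow> take l (drop k c) \<noteq> p"
    unfolding creturn_def l_def m_def by auto
  have l0: "0 < l" using False l_def by simp
  have p1: "p = map v [i..<i + l]"
  proof -
    have "p = take l c" using pc l_def by (auto simp: prefix_def)
    thus ?thesis using ci ifa_take[of l m v i] lm by (simp add: inf_factor_at_def)
  qed
  define i' where "i' = i + (m - l)"
  have p2: "p = map v [i'..<i' + l]"
  proof -
    have "p = drop (m - l) c" using sc l_def m_def by (auto simp: suffix_def)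
    also have "\<dots> = take l (drop (m - l) c)" using m_def by simp
    also have "\<dots> = inf_factor_at v i' l" using ci ifa_take_drop[of "m - l" l m v i] lm i'_def by simp
    finally show ?thesis by (simp add: inf_factor_at_def)
  qed
  have i'l: "i' + l = i + m" using i'_def lm by simp
  have valc: "\<forall>x\<in>set c. valid x" using cmap valid_v by auto
  have valp: "\<forall>x\<in>set p. valid x" using p1 valid_v by auto
  define Pc where "Pc = Phi c"
  define Pp where "Pp = Phi p"
  have Pc: "Pc = inf_factor_at uu (T i) (T (i + m) - T i + length w)" using Phi_v cmap Pc_def by simp
  have Pp1: "Pp = inf_factor_at uu (T i) (T (i + l) - T i + length w)" using Phi_v p1 Pp_def by simp
  have Pp2: "Pp = inf_factor_at uu (T i') (T (i + m) - T i' + length w)" using Phi_v[of i' l] p2 Pp_def i'l by simp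
  have mo: "T i \<le> T (i + l)" "T (i + l) < T (i + m)" "T i \<le> T i'" "T i' \<le> T (i + m)"
    using T_le_iff T_less_iff lm i'_def by auto
  have crP: "creturn Pp Pc"
    unfolding creturn_def
  proof (intro conjI allI impI)
    have "take (length Pp) Pc = Pp" unfolding Pc Pp1 using mo by (simp add: ifa_take)
    thus "prefix Pp Pc" by (metis take_is_prefix)
  next
    have "Pc = inf_factor_at uu (T i) (T i' - T i) @ Pp"
      unfolding Pc Pp2 using mo ifa_add[of uu "T i" "T i' - T i" "T (i + m) - T i' + length w"] by simp
    thus "suffix Pp Pc" by (simp add: suffix_def)
  next
    show "length Pp < length Pc" unfolding Pc Pp1 using mo by simp
  next
    fix k assume k: "0 < k \<and> k < length Pc - length Pp"
    show "take (length Pp) (drop k Pc) \<noteq> Pp"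
    proof
      assume tk: "take (length Pp) (drop k Pc) = Pp"
      have lPc: "length Pc = T (i + m) - T i + length w" using Pc by simp
      have kl: "k + length Pp \<le> T (i + m) - T i + length w" using k lPc by linarith
      have "take (length Pp) (drop k Pc) = inf_factor_at uu (T i + k) (length Pp)"
        unfolding Pc using ifa_take_drop[OF kl, of uu "T i"] .
      hence oc: "occ uu (inf_factor_at uu (T i) (T (i + l) - T i + length w)) (T i + k)"
        using tk Pp1 unfolding occ_def by simp
      obtain j where j: "T i + k = T j" "\<forall>k'\<le>l. T (j + k') = T i + k + (T (i + k') - T i)"
        using parse[OF oc] by blast
      obtain j' where j': "T i + k = T j'" "map v [j'..<j' + l] = map v [i..<i + l]"
        using parse_v[OF oc] by blast
      have jj: "j' = j" using j(1) j'(1) T_le_iff by (metis antisym order_refl)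
      have ij: "i < j" using j(1) k T_less_iff by (metis less_add_same_cancel1)
      have "T (j + l) = k + T (i + l)" using j(2) mo by simp
      moreover have "k < T (i + m) - T (i + l)" using k unfolding Pc Pp1 using mo by simp
      ultimately have "T (j + l) < T (i + m)" by simp
      hence jl: "j + l < i + m" using T_less_iff by simp
      define k' where "k' = j - i"
      have kl': "k' + l \<le> m" using jl ij k'_def by linarith
      have "take l (drop k' c) = inf_factor_at v (i + k') l" using ci ifa_take_drop[OF kl', of v i] by simp
      also have "\<dots> = map v [j..<j + l]" using ij k'_def by (simp add: inf_factor_at_def)
      also have "\<dots> = p" using j'(2) jj p1 by simp
      moreover have "0 < k'" "k' < m - l" using ij jl k'_def by linarith+
      ultimately show False using noint[of k'] by simp
    qed
  qed
  have fPc: "is_inf_factor u Pc" unfolding Pc using uu_factor factor_ifa by blast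
  have tPp: "\<Theta> Pp = Pp" unfolding Pp_def using Phi_TH[OF valp] pp by simp
  have lPp: "N \<le> length Pp" unfolding Pp_def using Phi_len[of p] wN by simp
  have "\<Theta> Pc = Pc" using creturn_pal[OF fPc crP tPp lPp] .
  hence "Phi (rev c) = Phi c" using Phi_TH[OF valc] Pc_def by simp
  thus ?thesis using Phi_inj[of "rev c" c] valc by simp
qed

end

lemma rich_from_returns:
  fixes v :: "nat \<Rightarrow> 'b"
  assumes P: "\<And>c p. is_inf_factor v c \<Longrightarrow> creturn p c \<Longrightarrow> rev p = p \<Longrightarrow> rev c = c"
  shows "rich v"
proof -
  interpret I: invo id by unfold_locales simp
  have rv: "rev = TH id" by (simp add: fun_eq_iff TH_def)
  have G0: "G (TH id) x = 0" for x :: "'b list" using I.G_eq[of x] by (simp add: I.Gset_def)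
  have "is_inf_factor v x \<Longrightarrow> defect (TH id) x = 0" for x
  proof (induction x rule: rev_induct)
    case Nil
    have "Pal (TH id) ([] :: 'b list) = {[]}" unfolding Pal_def by (auto simp: TH_def)
    thus ?case unfolding defect_def using G0 by simp
  next
    case (snoc a x)
    define xa where "xa = x @ [a]"
    have fxa: "is_inf_factor v xa" using snoc xa_def by simp
    have fx: "is_inf_factor v x" using factor_sublist[OF fxa] xa_def by (metis sublist_append_rightI)
    have d0: "defect (TH id) x = 0" using snoc.IH[OF fx] .
    define S where "S = {q. suffix q xa \<and> rev q = q}"
    have finS: "finite S"
    proof -
      have "S \<subseteq> set (sublists xa)" unfolding S_def by auto
      thus ?thesis using finite_subset by blast
    qed
    have aS: "[a] \<in> S" unfolding S_def xa_def by (simp add: suffix_def)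
    define L where "L = Max (length ` S)"
    have "L \<in> length ` S" unfolding L_def using finS aS by (intro Max_in) auto
    then obtain q0 where q0: "q0 \<in> S" "length q0 = L" by (metis imageE)
    have maxL: "length q \<le> L" if "q \<in> S" for q using finS that unfolding L_def by simp
    have sq0: "suffix q0 xa" and rq0: "rev q0 = q0" using q0 S_def by auto
    have nsub: "\<not> sublist q0 x"
    proof
      assume "sublist q0 x"
      then obtain ps ss where xs: "x = ps @ q0 @ ss" by (auto simp: sublist_def)
      define J where "J = {j. j < length xa - length q0 \<and> take (length q0) (drop j xa) = q0}"
      have j0: "length ps \<in> J" unfolding J_def xa_def xs by simp
      have finJ: "finite J" unfolding J_def by (rule finite_subset[of _ "{..<length xa}"]) auto
      define js where "js = Max J"
      have jsJ: "js \<in> J" using Max_in[OF finJ] j0 js_def by auto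
      have jsmax: "j \<le> js" if "j \<in> J" for j using finJ that js_def by simp
      define c where "c = drop js xa"
      have crc: "creturn q0 c"
        unfolding creturn_def
      proof (intro conjI allI impI)
        have "take (length q0) c = q0" using jsJ unfolding J_def c_def by simp
        thus "prefix q0 c" by (metis take_is_prefix)
        show "length q0 < length c" using jsJ unfolding J_def c_def by simp linarith
        hence "length q0 \<le> length (drop js xa)" using c_def by simp
        thus "suffix q0 c" unfolding c_def by (rule suffix_length_suffix[OF sq0 suffix_drop])
      next
        fix k assume k: "0 < k \<and> k < length c - length q0"
        show "take (length q0) (drop k c) \<noteq> q0"
        proof
          assume "take (length q0) (drop k c) = q0"
          hence "js + k \<in> J" using k unfolding J_def c_def by (simp add: add.commute) linarith
          thus False using jsmax[of "js + k"] k by simp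
        qed
      qed
      have fc: "is_inf_factor v c" using factor_sublist[OF fxa] c_def by simp
      have "rev c = c" using P[OF fc crc rq0] .
      hence "c \<in> S" unfolding S_def c_def using suffix_drop by auto
      hence "length c \<le> L" using maxL by simp
      moreover have "length q0 < length c" using crc unfolding creturn_def by simp
      ultimately show False using q0 by simp
    qed
    have tq: "TH id q0 = q0" using rq0 by (simp add: TH_def)
    have "q0 \<in> Pal (TH id) xa" unfolding Pal_def using sq0 tq by auto
    moreover have "q0 \<notin> Pal (TH id) x" unfolding Pal_def using nsub by auto
    ultimately have "card (Pal (TH id) xa) = card (Pal (TH id) x) + 1"
      using I.card_Pal_snoc_new xa_def by simp
    thus ?case using d0 G0 unfolding defect_def xa_def by simp
  qed
  thus ?thesis unfolding rich_def rv by blast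
qed

theorem theorem2:
  fixes \<Theta> :: "'a::finite list \<Rightarrow> 'a list" and u :: "nat \<Rightarrow> 'a"
  assumes "invol_antimorphism \<Theta>"
    and "uniformly_recurrent u"
    and "finite_defect \<Theta> u"
  shows "\<exists>(B::nat set) (\<phi>::nat \<Rightarrow> 'a list) (v::nat \<Rightarrow> nat).
           finite B \<and> (\<forall>n. v n \<in> B) \<and> uniformly_recurrent v \<and>
           is_morph_image \<phi> v u \<and> rich v"
proof -
  obtain \<theta> where inv: "\<forall>a. \<theta> (\<theta> a) = a" and eq: "\<Theta> = TH \<theta>" using theta_exists[OF assms(1)] by blast
  interpret URset \<theta> u
  proof unfold_locales
    show "\<And>a. \<theta> (\<theta> a) = a" using inv by simp
    show "uniformly_recurrent u" using assms(2) .
    show "finite_defect (TH \<theta>) u" using assms(3) eq by simp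
  qed
  obtain w where w: "TH \<theta> w = w" "N \<le> length w" "E w" using long_pal by blast
  interpret D: Der \<theta> u w by unfold_locales (use w in auto)
  have rich: "rich D.v" by (rule rich_from_returns, rule D.v_pal_return)
  show ?thesis
    by (rule exI[of _ "range D.v"], rule exI[of _ D.phi], rule exI[of _ D.v])
       (use D.v_range_finite D.v_UR D.morph rich in auto)
qed


end
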